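(* Let $A$ be an $n\times n$ matrix with non-negative real entries and $\|A\|_{\max}\le 1$. Any eigenvalue $\mu$ of $A$ with $\mathrm{Im}(\mu)\neq 0$ satisfies \[ |\mu| \le \frac{n}{2} \qquad\text{and}\qquad |\mathrm{Re}(\mu)| \le \frac{3+\sqrt{57}}{24}\, n. \]
   Context: $\|A\|_{\max}$ denotes the largest absolute value of an entry of $A$. *)

theory Defs
  imports "HOL-Analysis.Analysis"
begin

definition complex_eigenvalue :: "real^'n^'n \<Rightarrow> complex \<Rightarrow> bool" where
  "complex_eigenvalue A mu \<longleftrightarrow>
     (\<exists>v :: complex^'n. v \<noteq> 0 \<and>
        (\<chi> i. \<Sum>j\<in>UNIV. complex_of_real (A $ i $ j) * v $ j) = mu *s v)"

end

theory Submission
  imports Defs "HOL-Analysis.Analysis"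
begin

lemma final_alg:
  fixes n m r c p :: real
  assumes n: "n > 0" and m0: "0 \<le> m" and mr: "m \<le> r" and rc: "r \<le> c"
    and p0: "0 \<le> p" and cp: "c + p \<le> n"
    and key: "2*m^2 + r^2 \<le> r*c + m*p + p^2/16 + (n-c)*(n-p)/4"
  shows "12*m^2 - 3*m*n - n^2 \<le> 0"
proof (rule ccontr)
  assume X: "\<not> ?thesis"
  hence X: "12*m^2 - 3*m*n - n^2 > 0" by simp
  have m43: "m \<ge> 43/100 * n"
  proof (rule ccontr)
    assume "\<not> ?thesis"
    hence "m < 43/100*n" by simp
    have "12*m^2 - 3*m*n - n^2 = (m - 43/100*n)*(12*m + (54/25)*n) + (-89/1250)*n^2"
      by (simp add: power2_eq_square field_simps)
    moreover have "(m - 43/100*n)*(12*m + (54/25)*n) \<le> 0"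
      by (rule mult_nonpos_nonneg; insert \<open>m < 43/100*n\<close> m0 n; (simp add: field_simps)?; linarith?)
    moreover have "(-89/1250)*n^2 < 0" using n by simp
    ultimately have "12*m^2 - 3*m*n - n^2 < 0" by linarith
    then show False using X by simp
  qed
  have P: "m*p + p^2/16 + (n-c)*(n-p)/4 \<le> m*(n-c) + (n-c)^2/16 + (n-c)*c/4"
  proof -
    have "m*(n-c) + (n-c)^2/16 + (n-c)*c/4 - (m*p + p^2/16 + (n-c)*(n-p)/4)
        = (n-c-p)*(m + (n-c+p)/16 - (n-c)/4)" by (simp add: power2_eq_square field_simps)
    also have "\<dots> \<ge> 0" by (intro mult_nonneg_nonneg; insert cp p0 m43 rc mr m0 n; (simp add: field_simps)?; linarith?)
    finally show ?thesis by simp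
  qed
  have key2: "2*m^2 \<le> r*(c-r) + m*(n-c) + (n-c)^2/16 + (n-c)*c/4"
    using key P by (simp add: power2_eq_square field_simps)
  show False
  proof (cases "c \<le> 2*m")
    case True
    have "r*(c-r) - m*(c-m) = (r-m)*(c-r-m)" by (simp add: algebra_simps)
    also have "\<dots> \<le> 0" by (intro mult_nonneg_nonpos; insert True mr rc; (simp add: field_simps)?; linarith?)
    finally have R: "r*(c-r) \<le> m*(c-m)" by simp
    have "(n-c)^2/16 + (n-c)*c/4 - ((n-m)^2/16 + (n-m)*m/4) = (c-m)*(2*n-3*c-3*m)/16"
      by (simp add: power2_eq_square field_simps)
    also have "\<dots> \<le> 0" by (intro divide_nonpos_pos mult_nonneg_nonpos; insert mr rc m43 n; (simp add: field_simps)?; linarith?)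
    finally have Ph: "(n-c)^2/16 + (n-c)*c/4 \<le> (n-m)^2/16 + (n-m)*m/4" by simp
    have "2*m^2 \<le> m*(c-m) + m*(n-c) + (n-m)^2/16 + (n-m)*m/4" using key2 R Ph by linarith
    hence "51*m^2 - 18*m*n - n^2 \<le> 0" by (simp add: power2_eq_square field_simps)
    moreover have "51*m^2 - 18*m*n - n^2 > 0"
    proof -
      have "51*m^2 - 18*m*n - n^2 = (m - 43/100*n)*(51*m + (393/100)*n) + (6899/10000)*n^2"
        by (simp add: power2_eq_square field_simps)
      moreover have "(m - 43/100*n)*(51*m + (393/100)*n) \<ge> 0" by (intro mult_nonneg_nonneg; insert m43 m0 n; (simp add: field_simps)?; linarith?)
      moreover have "(6899/10000)*n^2 > 0" using n by simp
      ultimately show ?thesis by linarith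
    qed
    ultimately show False by simp
  next
    case False
    have R: "r*(c-r) \<le> c^2/4"
    proof -
      have "c^2/4 - r*(c-r) = (c/2 - r)^2" by (simp add: power2_eq_square field_simps)
      thus ?thesis by (metis diff_ge_0_iff_ge zero_le_power2)
    qed
    have "2*m^2 \<le> c^2/4 + m*(n-c) + (n-c)^2/16 + (n-c)*c/4" using key2 R by linarith
    hence A1: "2*m^2 \<le> c*n/4 + m*(n-c) + (n-c)^2/16" by (simp add: power2_eq_square field_simps)
    have "c*n/4 + m*(n-c) + (n-c)^2/16 \<le> 2*m*n/4 + m*(n-2*m) + (n-2*m)^2/16"
    proof -
      have "2*m*n/4 + m*(n-2*m) + (n-2*m)^2/16 - (c*n/4 + m*(n-c) + (n-c)^2/16)
          = (c - 2*m)*(m - n/4 + (2*n - c - 2*m)/16)" by (simp add: power2_eq_square field_simps)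
      also have "\<dots> \<ge> 0" by (intro mult_nonneg_nonneg; insert False cp p0 m43 n; (simp add: field_simps)?; linarith?)
      finally show ?thesis by simp
    qed
    hence "2*m^2 \<le> 2*m*n/4 + m*(n-2*m) + (n-2*m)^2/16" using A1 by linarith
    hence "60*m^2 - 20*m*n - n^2 \<le> 0" by (simp add: power2_eq_square field_simps)
    moreover have "60*m^2 - 20*m*n - n^2 > 0"
    proof -
      have "60*m^2 - 20*m*n - n^2 = (m - 43/100*n)*(60*m + (29/5)*n) + (747/500)*n^2"
        by (simp add: power2_eq_square field_simps)
      moreover have "(m - 43/100*n)*(60*m + (29/5)*n) \<ge> 0" by (intro mult_nonneg_nonneg; insert m43 m0 n; (simp add: field_simps)?; linarith?)
      moreover have "(747/500)*n^2 > 0" using n by simp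
      ultimately show ?thesis by linarith
    qed
    ultimately show False by simp
  qed
qed

lemma key_alg:
  fixes N2 S5 s gA L2 r c a m p al be D :: real
  assumes "N2 \<le> s" "S5 \<le> N2" "gA^2 \<le> (N2 - S5)*L2" "L2 \<ge> 0"
    "s = r*c + a*p + al*be*D + gA" "S5 = 2*m^2 + D^2 + r^2" "p = al^2 + be^2" "a \<le> m"
  shows "2*m^2 + r^2 \<le> r*c + m*p + p^2/16 + L2/4"
proof -
  have gA: "gA \<le> (N2 - S5) + L2/4"
  proof (cases "gA \<le> 0")
    case True thus ?thesis using assms by linarith
  next
    case False
    have "gA^2 \<le> ((N2 - S5) + L2/4)^2"
    proof -
      have "((N2 - S5) + L2/4)^2 - (N2 - S5)*L2 = ((N2 - S5) - L2/4)^2" by (simp add: power2_eq_square field_simps)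
      thus ?thesis using assms(3) by (smt (verit) zero_le_power2)
    qed
    thus ?thesis by (rule power2_le_imp_le) (use assms in linarith)
  qed
  have ab: "al*be*D \<le> p^2/16 + D^2"
  proof -
    have h1: "2*\<bar>al*be\<bar> \<le> p"
    proof -
      have "0 \<le> (\<bar>al\<bar> - \<bar>be\<bar>)^2" by simp
      thus ?thesis using assms(7) by (simp add: power2_eq_square abs_mult algebra_simps)
    qed
    have h2: "p*\<bar>D\<bar>/2 \<le> p^2/16 + D^2"
    proof -
      have "0 \<le> (\<bar>D\<bar> - p/4)^2" by simp
      thus ?thesis by (simp add: power2_eq_square algebra_simps)
    qed
    have "al*be*D \<le> \<bar>al*be\<bar>*\<bar>D\<bar>" by (metis abs_ge_self abs_mult)
    also have "\<dots> \<le> (p/2)*\<bar>D\<bar>" using h1 by (intro mult_right_mono) auto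
    finally show ?thesis using h2 by linarith
  qed
  have "a*p \<le> m*p" using assms by (simp add: mult_right_mono)
  thus ?thesis using assms gA ab by linarith
qed

lemma bessel_G:
  fixes X G :: "'a::real_inner" and F :: "nat \<Rightarrow> 'a" and I :: "nat set"
  assumes fin: "finite I" and on: "\<forall>i\<in>I. \<forall>j\<in>I. inner (F i) (F j) = (if i = j then 1 else 0)"
    and og: "\<forall>i\<in>I. inner (F i) G = 0"
  shows "(\<Sum>i\<in>I. (inner X (F i))^2) \<le> inner X X"
    and "(inner X G)^2 \<le> (inner X X - (\<Sum>i\<in>I. (inner X (F i))^2)) * inner G G"
proof -
  define c where "c i = inner X (F i)" for i
  define P where "P = (\<Sum>i\<in>I. c i *\<^sub>R F i)"
  have PF: "inner P (F j) = c j" if "j \<in> I" for j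
  proof -
    have "inner P (F j) = (\<Sum>i\<in>I. c i * inner (F i) (F j))"
      by (simp add: P_def inner_sum_left)
    also have "\<dots> = (\<Sum>i\<in>I. if i = j then c i else 0)"
      using on that by (intro sum.cong) auto
    also have "\<dots> = c j" using fin that by simp
    finally show ?thesis .
  qed
  have PP: "inner P P = (\<Sum>i\<in>I. (c i)^2)"
  proof -
    have "inner P P = (\<Sum>j\<in>I. c j * inner P (F j))"
      by (simp add: P_def inner_sum_right)
    also have "\<dots> = (\<Sum>j\<in>I. (c j)^2)" using PF by (intro sum.cong) (auto simp: power2_eq_square)
    finally show ?thesis .
  qed
  have XP: "inner X P = (\<Sum>i\<in>I. (c i)^2)"
    by (simp add: P_def inner_sum_right c_def power2_eq_square)
  have PG: "inner P G = 0"
    using og by (simp add: P_def inner_sum_left)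
  define R where "R = X - P"
  have RR: "inner R R = inner X X - (\<Sum>i\<in>I. (c i)^2)"
    proof -
    have "inner P X = inner X P" by (rule inner_commute)
    thus ?thesis using XP PP by (simp add: R_def inner_diff_left inner_diff_right)
  qed
  have RG: "inner R G = inner X G"
    by (simp add: R_def inner_diff_left PG)
  show "(\<Sum>i\<in>I. (inner X (F i))^2) \<le> inner X X"
    using RR inner_ge_zero[of R] by (simp add: c_def)
  show "(inner X G)^2 \<le> (inner X X - (\<Sum>i\<in>I. (inner X (F i))^2)) * inner G G"
    using Cauchy_Schwarz_ineq[of R G] RR RG by (simp add: c_def)
qed

definition outer :: "real^'n \<Rightarrow> real^'n \<Rightarrow> real^'n^'n" where
  "outer z q = (\<chi> i j. z$i * q$j)"

lemma inner_outer: "inner M (outer z q) = inner z (M *v q)"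
  by (simp add: outer_def inner_vec_def matrix_vector_mult_def sum_distrib_left algebra_simps)

lemma inner_outer_outer: "inner (outer z1 q1) (outer z2 q2) = inner z1 z2 * inner q1 q2"
proof -
  have "inner (outer z1 q1) (outer z2 q2) = (\<Sum>i\<in>UNIV. z1$i*z2$i * (\<Sum>j\<in>UNIV. q1$j*q2$j))"
    by (simp add: outer_def inner_vec_def sum_distrib_left algebra_simps)
  also have "\<dots> = (\<Sum>i\<in>UNIV. z1$i*z2$i) * (\<Sum>j\<in>UNIV. q1$j*q2$j)"
    by (simp add: sum_distrib_right)
  finally show ?thesis by (simp add: inner_vec_def)
qed

lemma geom:
  fixes A :: "real^'n^'n" and x y p :: "real^'n" and a b r :: real
  assumes nonneg: "\<forall>i j. 0 \<le> A $ i $ j" and le1: "\<forall>i j. A $ i $ j \<le> 1"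
    and xy: "inner x y = 0" and x0: "x \<noteq> 0" and y0: "y \<noteq> 0"
    and Ax: "A *v x = a *\<^sub>R x - b *\<^sub>R y" and Ay: "A *v y = b *\<^sub>R x + a *\<^sub>R y"
    and pnn: "\<forall>i. 0 \<le> p $ i" and pn: "inner p p = 1" and pA: "p v* A = r *\<^sub>R p"
    and px: "inner p x = 0" and py: "inner p y = 0"
    and rm: "sqrt (a^2 + b^2) \<le> r"
  shows "12 * (sqrt (a^2+b^2))^2 - 3 * sqrt (a^2+b^2) * real CARD('n) - (real CARD('n))^2 \<le> 0"
proof -
  define m where "m = sqrt (a^2+b^2)"
  define n where "n = real CARD('n)"
  have m2: "m^2 = a^2 + b^2" unfolding m_def by simp
  have m0: "0 \<le> m" unfolding m_def by simp
  have am: "a \<le> m" unfolding m_def by (simp add: real_sqrt_sum_squares_ge1)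
  have n0: "n > 0" unfolding n_def by simp
  define u where "u = (1/norm x) *\<^sub>R x"
  define w where "w = (1/norm y) *\<^sub>R y"
  have nx: "norm x > 0" and ny: "norm y > 0" using x0 y0 by auto
  have uu: "inner u u = 1" unfolding u_def using nx by (simp add: power2_norm_eq_inner[symmetric] power2_eq_square)
  have ww: "inner w w = 1" unfolding w_def using ny by (simp add: power2_norm_eq_inner[symmetric] power2_eq_square)
  have uw: "inner u w = 0" "inner w u = 0" unfolding u_def w_def using xy by (simp_all add: inner_commute)
  have pu: "inner p u = 0" "inner u p = 0" unfolding u_def using px by (simp_all add: inner_commute)
  have pw: "inner p w = 0" "inner w p = 0" unfolding w_def using py by (simp_all add: inner_commute)
  define k21 where "k21 = - (b * norm y / norm x)"
  define k12 where "k12 = b * norm x / norm y"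
  have Au: "A *v u = a *\<^sub>R u + k21 *\<^sub>R w"
    unfolding u_def w_def k21_def using nx ny
    by (simp add: matrix_vector_mult_scaleR Ax algebra_simps)
  have Aw: "A *v w = k12 *\<^sub>R u + a *\<^sub>R w"
    unfolding u_def w_def k12_def using nx ny
    by (simp add: matrix_vector_mult_scaleR Ay algebra_simps)
  have kk: "k12 * k21 = -(b^2)" unfolding k12_def k21_def using nx ny by (simp add: power2_eq_square)
  define one where "one = (1::real^'n)"
  have oneone: "inner one one = n" unfolding one_def n_def by (simp add: inner_vec_def)
  define al where "al = inner u one"
  define be where "be = inner w one"
  define sp where "sp = inner p one"
  define c where "c = sp^2"
  define pp where "pp = al^2 + be^2"
  define F :: "nat \<Rightarrow> real^'n^'n" where
    "F k = (if k = 0 then outer u u else if k = 1 then outer u w else if k = 2 then outer w u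
            else if k = 3 then outer w w else outer p p)" for k
  define g where "g = one - sp *\<^sub>R p"
  define h where "h = one - al *\<^sub>R u - be *\<^sub>R w"
  define G where "G = outer g h"
  have gp: "inner g p = 0"
  proof -
    have "inner g p = inner one p - sp * inner p p" by (simp add: g_def inner_diff_left)
    thus ?thesis using pn unfolding sp_def by (simp add: inner_commute)
  qed
  have hu: "inner h u = 0"
  proof -
    have "inner h u = inner one u - al * inner u u - be * inner w u" by (simp add: h_def inner_diff_left)
    thus ?thesis using uu uw unfolding al_def by (simp add: inner_commute[of one u])
  qed
  have hw: "inner h w = 0"
  proof -
    have "inner h w = inner one w - al * inner u w - be * inner w w" by (simp add: h_def inner_diff_left)
    thus ?thesis using ww uw unfolding be_def by (simp add: inner_commute[of one w])
  qed
  have gg: "inner g g = n - c"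
  proof -
    have "inner g g = inner g one - sp * inner g p" by (simp add: g_def[of] inner_diff_right)
    also have "inner g one = inner one one - sp * inner p one" by (simp add: g_def inner_diff_left)
    finally show ?thesis using gp oneone unfolding c_def sp_def by (simp add: power2_eq_square)
  qed
  have hh: "inner h h = n - pp"
  proof -
    have "inner h h = inner h one - al * inner h u - be * inner h w" by (simp add: h_def[of] inner_diff_right)
    also have "inner h one = inner one one - al * inner u one - be * inner w one" by (simp add: h_def inner_diff_left)
    finally show ?thesis using hu hw oneone unfolding pp_def al_def be_def by (simp add: power2_eq_square)
  qed
  have I5: "{0..<5::nat} = {0,1,2,3,4}" by auto
  have on: "\<forall>i\<in>{0..<5::nat}. \<forall>j\<in>{0..<5::nat}. inner (F i) (F j) = (if i = j then 1 else 0)"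
    unfolding I5 F_def using uu ww uw pu pw pn by (auto simp: inner_outer_outer inner_commute)
  have og: "\<forall>i\<in>{0..<5::nat}. inner (F i) G = 0"
    unfolding I5 F_def G_def using gp hu hw by (auto simp: inner_outer_outer inner_commute)
  have AF: "(\<Sum>i\<in>{0..<5::nat}. (inner A (F i))^2) = a^2 + k12^2 + k21^2 + a^2 + r^2"
  proof -
    have "inner p (A *v p) = r" using pA pn by (metis dot_lmul_matrix inner_scaleR_left mult.right_neutral)
    thus ?thesis unfolding I5 F_def using Au Aw uu ww uw
      by (simp add: inner_outer inner_add_right inner_commute)
  qed
  define S5 where "S5 = a^2 + k12^2 + k21^2 + a^2 + r^2"
  have bes1: "S5 \<le> inner A A" and bes2: "(inner A G)^2 \<le> (inner A A - S5) * inner G G"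
    using bessel_G[of "{0..<5::nat}" F G A, OF _ on og] AF unfolding S5_def by auto
  have GG: "inner G G = (n - c) * (n - pp)" unfolding G_def using gg hh by (simp add: inner_outer_outer)
  define sig where "sig = inner one (A *v one)"
  have NA: "inner A A \<le> sig"
  proof -
    have "inner A A = (\<Sum>i\<in>UNIV. \<Sum>j\<in>UNIV. A$i$j * A$i$j)" by (simp add: inner_vec_def)
    also have "\<dots> \<le> (\<Sum>i\<in>UNIV. \<Sum>j\<in>UNIV. A$i$j)"
    proof (intro sum_mono)
      fix i j
      show "A$i$j * A$i$j \<le> A$i$j" using nonneg le1 by (simp add: mult_left_le)
    qed
    also have "\<dots> = sig" unfolding sig_def one_def by (simp add: inner_vec_def matrix_vector_mult_def)
    finally show ?thesis .
  qed
  have sigeq: "sig = r*c + a*pp + al*be*(k12+k21) + inner A G"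
  proof -
    have one_dec: "one = al *\<^sub>R u + be *\<^sub>R w + h" unfolding h_def by simp
    have one_dec2: "one = sp *\<^sub>R p + g" unfolding g_def by simp
    have ph: "inner p h = sp" unfolding h_def sp_def using pu pw by (simp add: inner_diff_right)
    have pAh: "inner p (A *v h) = r * sp" using pA ph by (metis dot_lmul_matrix inner_scaleR_left)
    have gAh: "inner g (A *v h) = inner A G" unfolding G_def by (simp add: inner_outer)
    have oAh: "inner one (A *v h) = r * c + inner A G"
    proof -
      have "inner one (A *v h) = inner (sp *\<^sub>R p + g) (A *v h)" using one_dec2 by simp
      also have "\<dots> = sp * inner p (A *v h) + inner g (A *v h)" by (simp add: inner_add_left)
      finally show ?thesis using pAh gAh unfolding c_def by (simp add: power2_eq_square)
    qed
    have oAu: "inner one (A *v u) = a*al + k21*be" using Au unfolding al_def be_def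
      by (simp add: inner_add_right inner_commute)
    have oAw: "inner one (A *v w) = k12*al + a*be" using Aw unfolding al_def be_def
      by (simp add: inner_add_right inner_commute)
    have "sig = inner one (A *v (al *\<^sub>R u + be *\<^sub>R w + h))" unfolding sig_def using one_dec by simp
    also have "\<dots> = al * inner one (A *v u) + be * inner one (A *v w) + inner one (A *v h)"
      by (simp add: matrix_vector_right_distrib matrix_vector_mult_scaleR inner_add_right)
    finally show ?thesis using oAh oAu oAw unfolding pp_def by (simp add: power2_eq_square algebra_simps)
  qed
  have cpn: "c + pp \<le> n"
  proof -
    define F' :: "nat \<Rightarrow> real^'n" where "F' k = (if k = 0 then p else if k = 1 then u else w)" for k
    have I3: "{0..<3::nat} = {0,1,2}" by auto
    have on': "\<forall>i\<in>{0..<3::nat}. \<forall>j\<in>{0..<3::nat}. inner (F' i) (F' j) = (if i = j then 1 else 0)"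
      unfolding I3 F'_def using uu ww uw pu pw pn by auto
    have "(\<Sum>i\<in>{0..<3::nat}. (inner one (F' i))^2) \<le> inner one one"
      using bessel_G(1)[of "{0..<3::nat}" F' 0 one, OF _ on'] by simp
    thus ?thesis unfolding I3 F'_def c_def pp_def sp_def al_def be_def using oneone
      by (simp add: inner_commute)
  qed
  have rc: "r \<le> c"
  proof -
    have "r = inner (p v* A) p" using pA pn by simp
    also have "\<dots> = (\<Sum>j\<in>UNIV. (\<Sum>i\<in>UNIV. p$i * A$i$j) * p$j)"
      by (simp add: inner_vec_def vector_matrix_mult_def)
    also have "\<dots> \<le> (\<Sum>j\<in>UNIV. sp * p$j)"
    proof (intro sum_mono mult_right_mono)
      fix j
      show "0 \<le> p$j" using pnn by simp
      have "(\<Sum>i\<in>UNIV. p$i * A$i$j) \<le> (\<Sum>i\<in>UNIV. p$i)"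
        by (intro sum_mono) (use nonneg le1 pnn in \<open>simp add: mult_right_le_one_le\<close>)
      thus "(\<Sum>i\<in>UNIV. p$i * A$i$j) \<le> sp" unfolding sp_def one_def by (simp add: inner_vec_def)
    qed
    also have "\<dots> = c" unfolding c_def sp_def one_def by (simp add: inner_vec_def sum_distrib_left power2_eq_square)
    finally show ?thesis .
  qed
  have pp0: "0 \<le> pp" unfolding pp_def by simp
  have S5': "S5 = 2*m^2 + (k12+k21)^2 + r^2" unfolding S5_def using m2 kk by (simp add: power2_eq_square algebra_simps)
  have c0: "0 \<le> c" unfolding c_def by simp
  have L2nn: "0 \<le> (n-c)*(n-pp)"
    by (rule mult_nonneg_nonneg) (use cpn pp0 c0 in linarith)+
  have key: "2*m^2 + r^2 \<le> r*c + m*pp + pp^2/16 + ((n-c)*(n-pp))/4"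
    by (rule key_alg[OF NA bes1 _ _ sigeq S5' pp_def am])
       (use bes2 GG L2nn in auto)
  have mr: "m \<le> r" using rm unfolding m_def .
  have "12*m^2 - 3*m*n - n^2 \<le> 0"
    by (rule final_alg[OF n0 m0 mr rc pp0 cpn key])
  thus ?thesis unfolding m_def n_def .
qed

lemma perron_left:
  fixes A :: "real^'n^'n" and z :: "real^'n" and t :: real
  assumes nonneg: "\<forall>i j. 0 \<le> A $ i $ j" and z0: "\<forall>j. 0 \<le> z $ j" and znz: "z \<noteq> 0"
    and zt: "\<forall>j. t * z $ j \<le> (\<Sum>i\<in>UNIV. A $ i $ j * z $ i)"
  shows "\<exists>q r. (\<forall>j. 0 \<le> q $ j) \<and> q \<noteq> 0 \<and> q v* A = r *\<^sub>R q \<and> t \<le> r"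
proof -
  define T where "T q = (\<chi> j. \<Sum>i\<in>UNIV. A $ i $ j * q $ i)" for q :: "real^'n"
  have Tj: "T q $ j = (\<Sum>i\<in>UNIV. A $ i $ j * q $ i)" for q j unfolding T_def by simp
  define S where "S = {q :: real^'n. (\<forall>j. 0 \<le> q $ j) \<and> (\<Sum>j\<in>UNIV. q $ j) = 1 \<and>
                        (\<forall>j. t * q $ j \<le> (\<Sum>i\<in>UNIV. A $ i $ j * q $ i))}"
  define d where "d q = 1 + (\<Sum>j\<in>UNIV. \<Sum>i\<in>UNIV. A $ i $ j * q $ i)" for q :: "real^'n"
  define f where "f q = (1 / d q) *\<^sub>R (q + T q)" for q
  have Tnn: "0 \<le> T q $ j" if "\<forall>j. 0 \<le> q $ j" for q j
    unfolding Tj using nonneg that by (intro sum_nonneg) simp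
  have d1: "d q \<ge> 1" if "\<forall>j. 0 \<le> q $ j" for q
    unfolding d_def using Tnn[OF that] unfolding Tj by (simp add: sum_nonneg)
  have sz: "(\<Sum>j\<in>UNIV. z $ j) > 0"
  proof -
    obtain j where "z $ j \<noteq> 0" using znz by (metis vec_eq_iff zero_index)
    hence "z $ j > 0" using z0 by (metis order_le_less)
    moreover have "z $ j \<le> (\<Sum>j\<in>UNIV. z $ j)"
      using z0 by (intro member_le_sum) auto
    ultimately show ?thesis by linarith
  qed
  have Sne: "S \<noteq> {}"
  proof -
    define s where "s = (\<Sum>j\<in>UNIV. z $ j)"
    define z' where "z' = (1 / s) *\<^sub>R z"
    have c1: "0 \<le> z' $ j" for j unfolding z'_def using z0 sz s_def by simp
    have c2: "(\<Sum>j\<in>UNIV. z' $ j) = 1" unfolding z'_def using sz s_def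
      by (simp add: sum_divide_distrib[symmetric])
    have c3: "t * z' $ j \<le> (\<Sum>i\<in>UNIV. A $ i $ j * z' $ i)" for j
    proof -
      have "t * z' $ j = (t * z $ j) / s" unfolding z'_def by simp
      also have "\<dots> \<le> (\<Sum>i\<in>UNIV. A $ i $ j * z $ i) / s"
        using zt sz s_def by (intro divide_right_mono) auto
      also have "\<dots> = (\<Sum>i\<in>UNIV. A $ i $ j * z' $ i)"
        unfolding z'_def by (simp add: sum_divide_distrib)
      finally show ?thesis .
    qed
    have "z' \<in> S" unfolding S_def using c1 c2 c3 by blast
    thus ?thesis by auto
  qed
  have Sbd: "S \<subseteq> cbox 0 1"
  proof
    fix q assume q: "q \<in> S"
    have "0 \<le> q $ j \<and> q $ j \<le> 1" for j
    proof -
      have "q $ j \<le> (\<Sum>j\<in>UNIV. q $ j)" using q unfolding S_def by (intro member_le_sum) auto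
      thus ?thesis using q unfolding S_def by auto
    qed
    thus "q \<in> cbox 0 1" by (simp add: mem_box_cart)
  qed
  have Scl: "closed S"
  proof -
    have "S = {q. \<forall>j. 0 \<le> q $ j} \<inter> {q. (\<Sum>j\<in>UNIV. q $ j) = 1} \<inter>
              {q. \<forall>j. t * q $ j \<le> (\<Sum>i\<in>UNIV. A $ i $ j * q $ i)}"
      unfolding S_def by auto
    moreover have "closed {q :: real^'n. \<forall>j. 0 \<le> q $ j}"
      apply (rule closed_Collect_all)
      apply (rule closed_Collect_le)
      by (intro continuous_on_sum continuous_on_mult continuous_on_const continuous_on_component continuous_on_id)+
    moreover have "closed {q :: real^'n. (\<Sum>j\<in>UNIV. q $ j) = 1}"
      apply (rule closed_Collect_eq)
      by (intro continuous_on_sum continuous_on_mult continuous_on_const continuous_on_component continuous_on_id)+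
    moreover have "closed {q :: real^'n. \<forall>j. t * q $ j \<le> (\<Sum>i\<in>UNIV. A $ i $ j * q $ i)}"
      apply (rule closed_Collect_all)
      apply (rule closed_Collect_le)
      by (intro continuous_on_sum continuous_on_mult continuous_on_const continuous_on_component continuous_on_id)+
    ultimately show ?thesis by (simp only: closed_Int)
  qed
  have Scomp: "compact S"
    unfolding compact_eq_bounded_closed using Scl bounded_subset[OF bounded_cbox Sbd] by blast
  have Sconv: "convex S"
  proof (rule convexI)
    fix x y :: "real^'n" and u v :: real
    assume x: "x \<in> S" and y: "y \<in> S" and u: "0 \<le> u" and v: "0 \<le> v" and uv: "u + v = 1"
    have c1: "0 \<le> (u *\<^sub>R x + v *\<^sub>R y) $ j" for j using x y u v unfolding S_def by simp
    have c2: "(\<Sum>j\<in>UNIV. (u *\<^sub>R x + v *\<^sub>R y) $ j) = 1"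
      using x y uv unfolding S_def by (simp add: sum.distrib sum_distrib_left[symmetric])
    have c3: "t * (u *\<^sub>R x + v *\<^sub>R y) $ j \<le> (\<Sum>i\<in>UNIV. A $ i $ j * (u *\<^sub>R x + v *\<^sub>R y) $ i)" for j
    proof -
      have hx: "t * x $ j \<le> (\<Sum>i\<in>UNIV. A $ i $ j * x $ i)" and hy: "t * y $ j \<le> (\<Sum>i\<in>UNIV. A $ i $ j * y $ i)"
        using x y unfolding S_def by auto
      have "t * (u *\<^sub>R x + v *\<^sub>R y) $ j = u * (t * x $ j) + v * (t * y $ j)" by (simp add: algebra_simps)
      also have "\<dots> \<le> u * (\<Sum>i\<in>UNIV. A $ i $ j * x $ i) + v * (\<Sum>i\<in>UNIV. A $ i $ j * y $ i)"
        using hx hy u v by (intro add_mono mult_left_mono) auto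
      also have "\<dots> = (\<Sum>i\<in>UNIV. A $ i $ j * (u *\<^sub>R x + v *\<^sub>R y) $ i)"
        by (simp add: sum_distrib_left sum.distrib algebra_simps)
      finally show ?thesis .
    qed
    show "u *\<^sub>R x + v *\<^sub>R y \<in> S" unfolding S_def using c1 c2 c3 by blast
  qed
  have Snn: "\<forall>j. 0 \<le> q $ j" if "q \<in> S" for q using that unfolding S_def by auto
  have contf: "continuous_on S f"
  proof -
    have "\<forall>q\<in>S. d q \<noteq> 0" using d1 Snn by (metis not_one_le_zero)
    thus ?thesis unfolding f_def T_def
      by (intro continuous_intros) (auto simp: d_def intro!: continuous_intros)
  qed
  have fS: "f \<in> S \<rightarrow> S"
  proof
    fix q assume q: "q \<in> S"
    have qn: "\<forall>j. 0 \<le> q $ j" using Snn[OF q] .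
    define D where "D = d q"
    have D1: "D \<ge> 1" unfolding D_def using d1[OF qn] .
    have fj: "f q $ j = (q $ j + T q $ j) / D" for j unfolding f_def D_def by simp
    have c1: "0 \<le> f q $ j" for j unfolding fj using qn Tnn[OF qn] D1 by simp
    have c2: "(\<Sum>j\<in>UNIV. f q $ j) = 1"
    proof -
      have "(\<Sum>j\<in>UNIV. f q $ j) = ((\<Sum>j\<in>UNIV. q $ j) + (\<Sum>j\<in>UNIV. T q $ j)) / D"
        unfolding fj by (simp add: sum_divide_distrib[symmetric] sum.distrib)
      also have "\<dots> = D / D" using q unfolding S_def D_def d_def Tj by simp
      finally show ?thesis using D1 by simp
    qed
    have c3: "t * f q $ j \<le> (\<Sum>i\<in>UNIV. A $ i $ j * f q $ i)" for j
    proof -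
      have h1: "t * q $ j \<le> T q $ j" using q unfolding S_def Tj by auto
      have h2: "t * T q $ j \<le> (\<Sum>i\<in>UNIV. A $ i $ j * T q $ i)"
      proof -
        have "t * T q $ j = (\<Sum>i\<in>UNIV. A $ i $ j * (t * q $ i))" unfolding Tj
          by (simp add: sum_distrib_left algebra_simps)
        also have "\<dots> \<le> (\<Sum>i\<in>UNIV. A $ i $ j * T q $ i)"
        proof (intro sum_mono mult_left_mono)
          fix i show "t * q $ i \<le> T q $ i" using q unfolding S_def Tj by auto
          show "0 \<le> A $ i $ j" using nonneg by simp
        qed
        finally show ?thesis .
      qed
      have "t * f q $ j = (t * q $ j + t * T q $ j) / D" unfolding fj by (simp add: algebra_simps)
      also have "\<dots> \<le> (T q $ j + (\<Sum>i\<in>UNIV. A $ i $ j * T q $ i)) / D"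
        using h1 h2 D1 by (intro divide_right_mono) auto
      also have "\<dots> = (\<Sum>i\<in>UNIV. A $ i $ j * f q $ i)"
        unfolding fj Tj by (simp add: sum_divide_distrib[symmetric] sum.distrib algebra_simps)
      finally show ?thesis .
    qed
    show "f q \<in> S" unfolding S_def using c1 c2 c3 by blast
  qed
  obtain q where qS: "q \<in> S" and fq: "f q = q"
    using brouwer[OF Scomp Sconv Sne contf fS] by blast
  have qn: "\<forall>j. 0 \<le> q $ j" using Snn[OF qS] .
  define r where "r = d q - 1"
  have D1: "d q \<ge> 1" using d1[OF qn] .
  have Tq: "T q = r *\<^sub>R q"
  proof -
    have "(1 / d q) *\<^sub>R (q + T q) = q" using fq unfolding f_def .
    hence "q + T q = d q *\<^sub>R q" using D1
      by (metis (no_types, lifting) divide_eq_0_iff not_one_le_zero scaleR_one scaleR_scaleR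
          nonzero_mult_div_cancel_left times_divide_eq_left times_divide_eq_right zero_neq_one)
    thus ?thesis unfolding r_def by (simp add: algebra_simps)
  qed
  have qA: "q v* A = r *\<^sub>R q"
    using Tq unfolding T_def by (simp add: vector_matrix_mult_def mult.commute)
  obtain j where qj: "q $ j > 0"
  proof -
    have "(\<Sum>j\<in>UNIV. q $ j) = 1" using qS unfolding S_def by auto
    then obtain j where "q $ j \<noteq> 0" by (metis (no_types, lifting) sum.neutral zero_neq_one)
    thus ?thesis using that qn by (metis order_le_less)
  qed
  have "t * q $ j \<le> r * q $ j"
  proof -
    have "t * q $ j \<le> T q $ j" using qS unfolding S_def Tj by auto
    thus ?thesis using Tq by simp
  qed
  hence tr: "t \<le> r" using qj by simp
  have "q \<noteq> 0" using qj by auto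
  thus ?thesis using qn qA tr by blast
qed

lemma sqrt57_root:
  fixes x n :: real
  assumes "0 \<le> x" "0 \<le> n" "12*x^2 - 3*x*n - n^2 \<le> 0"
  shows "x \<le> (3 + sqrt 57) / 24 * n"
proof (rule ccontr)
  assume "\<not> ?thesis"
  hence gt: "x - (3 + sqrt 57) / 24 * n > 0" by simp
  have s57: "(sqrt 57)^2 = 57" by simp
  have s3: "sqrt 57 \<ge> 3"
  proof -
    have "sqrt ((3::real)^2) \<le> sqrt 57" by (rule real_sqrt_le_mono) simp
    thus ?thesis by simp
  qed
  have "x - (3 - sqrt 57) / 24 * n > 0"
  proof -
    have "(sqrt 57 - 3) * n \<ge> 0" using s3 assms(2) by simp
    moreover have "(3 + sqrt 57) * n \<ge> 0" using s3 assms(2) by simp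
    ultimately show ?thesis using gt by (simp add: field_simps)
  qed
  hence "12 * ((x - (3 + sqrt 57) / 24 * n) * (x - (3 - sqrt 57) / 24 * n)) > 0"
    using gt by simp
  moreover have "12 * ((x - (3 + sqrt 57) / 24 * n) * (x - (3 - sqrt 57) / 24 * n)) = 12*x^2 - 3*x*n - n^2"
    using s57 by (simp add: power2_eq_square field_simps)
  ultimately show False using assms by linarith
qed

theorem corollary4:
  fixes A :: "real^'n^'n" and mu :: complex
  assumes nonneg: "\<forall>i j. 0 \<le> A $ i $ j"
    and maxnorm: "\<forall>i j. \<bar>A $ i $ j\<bar> \<le> 1"
    and eig: "complex_eigenvalue A mu"
    and nonreal: "Im mu \<noteq> 0"
  shows "cmod mu \<le> real CARD('n) / 2
    \<and> \<bar>Re mu\<bar> \<le> (3 + sqrt 57) / 24 * real CARD('n)"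
proof -
  have le1: "\<forall>i j. A $ i $ j \<le> 1" using maxnorm by (meson abs_le_D1)
  obtain v :: "complex^'n" where v0: "v \<noteq> 0"
    and ev: "(\<chi> i. \<Sum>j\<in>UNIV. complex_of_real (A $ i $ j) * v $ j) = mu *s v"
    using eig unfolding complex_eigenvalue_def by blast
  have evi: "(\<Sum>j\<in>UNIV. complex_of_real (A $ i $ j) * v $ j) = mu * v $ i" for i
    using ev by (metis (no_types, lifting) vec_lambda_beta vector_smult_component)
  define M :: "complex^'n^'n" where "M = (\<chi> i j. complex_of_real (A $ i $ j) - (if i = j then mu else 0))"
  have Mv: "M *v v = 0"
  proof -
    have "(M *v v) $ i = 0" for i
    proof -
      have "(M *v v) $ i = (\<Sum>j\<in>UNIV. complex_of_real (A $ i $ j) * v $ j - (if i = j then mu else 0) * v $ j)"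
        unfolding M_def by (simp add: matrix_vector_mult_def left_diff_distrib)
      also have "\<dots> = mu * v $ i - mu * v $ i"
      proof -
        have "(\<Sum>j\<in>UNIV. (if i = j then mu else 0) * v $ j) = (\<Sum>j\<in>UNIV. if i = j then mu * v $ j else 0)"
          by (intro sum.cong) auto
        hence "(\<Sum>j\<in>UNIV. (if i = j then mu else 0) * v $ j) = mu * v $ i" by simp
        thus ?thesis by (simp add: sum_subtractf evi)
      qed
      finally show ?thesis by simp
    qed
    thus ?thesis by (simp add: vec_eq_iff)
  qed
  have "\<not> (\<exists>B. B ** M = mat 1)" using matrix_left_invertible_ker[of M] Mv v0 by blast
  hence "\<not> invertible M" using invertible_left_inverse by blast
  hence "\<not> invertible (transpose M)"
    using invertible_right_inverse right_invertible_transpose invertible_left_inverse by metis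
  hence "\<not> (\<exists>B. B ** transpose M = mat 1)" using invertible_left_inverse by blast
  then obtain w where w0: "w \<noteq> 0" and Mw: "transpose M *v w = 0"
    using matrix_left_invertible_ker[of "transpose M"] by blast
  have lw: "(\<Sum>k\<in>UNIV. complex_of_real (A $ k $ j) * w $ k) = mu * w $ j" for j
  proof -
    have "(transpose M *v w) $ j = 0" using Mw by simp
    hence "(\<Sum>k\<in>UNIV. (complex_of_real (A $ k $ j) - (if k = j then mu else 0)) * w $ k) = 0"
      unfolding M_def by (simp add: vector_matrix_mult_def mult.commute)
    moreover have "(\<Sum>k\<in>UNIV. (if k = j then mu else 0) * w $ k) = mu * w $ j"
    proof -
      have "(\<Sum>k\<in>UNIV. (if k = j then mu else 0) * w $ k) = (\<Sum>k\<in>UNIV. if k = j then mu * w $ k else 0)"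
        by (intro sum.cong) auto
      thus ?thesis by simp
    qed
    moreover have "(\<Sum>k\<in>UNIV. (complex_of_real (A $ k $ j) - (if k = j then mu else 0)) * w $ k)
       = (\<Sum>k\<in>UNIV. complex_of_real (A $ k $ j) * w $ k) - (\<Sum>k\<in>UNIV. (if k = j then mu else 0) * w $ k)"
      by (simp only: left_diff_distrib sum_subtractf)
    ultimately have "(\<Sum>k\<in>UNIV. complex_of_real (A $ k $ j) * w $ k) - mu * w $ j = 0"
      by simp
    thus ?thesis by simp
  qed
  define z where "z = (\<chi> j. cmod (w $ j))"
  have z0: "\<forall>j. 0 \<le> z $ j" unfolding z_def by simp
  have znz: "z \<noteq> 0"
  proof
    assume "z = 0"
    hence "w $ j = 0" for j unfolding z_def by (metis norm_eq_zero vec_lambda_beta zero_index)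
    thus False using w0 by (simp add: vec_eq_iff)
  qed
  have zt: "\<forall>j. cmod mu * z $ j \<le> (\<Sum>i\<in>UNIV. A $ i $ j * z $ i)"
  proof
    fix j
    have "cmod mu * z $ j = cmod (\<Sum>k\<in>UNIV. complex_of_real (A $ k $ j) * w $ k)"
      unfolding z_def using lw by (simp add: norm_mult)
    also have "\<dots> \<le> (\<Sum>k\<in>UNIV. cmod (complex_of_real (A $ k $ j) * w $ k))" by (rule norm_sum)
    also have "\<dots> = (\<Sum>i\<in>UNIV. A $ i $ j * z $ i)"
      unfolding z_def using nonneg by (simp add: norm_mult)
    finally show "cmod mu * z $ j \<le> (\<Sum>i\<in>UNIV. A $ i $ j * z $ i)" .
  qed
  obtain q r where qnn: "\<forall>j. 0 \<le> q $ j" and q0: "q \<noteq> 0" and qA: "q v* A = r *\<^sub>R q"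
    and mr: "cmod mu \<le> r"
    using perron_left[OF nonneg z0 znz zt] by blast
  have qv: "(\<Sum>j\<in>UNIV. complex_of_real (q $ j) * v $ j) = 0"
  proof -
    have qAj: "(\<Sum>i\<in>UNIV. q $ i * A $ i $ j) = r * q $ j" for j
    proof -
      have "(q v* A) $ j = r * q $ j" using qA by simp
      moreover have "(q v* A) $ j = (\<Sum>i\<in>UNIV. q $ i * A $ i $ j)"
        by (simp only: vector_matrix_mult_def vec_lambda_beta)
      ultimately show ?thesis by simp
    qed
    have qAjc: "(\<Sum>i\<in>UNIV. complex_of_real (q $ i) * complex_of_real (A $ i $ j)) = complex_of_real r * complex_of_real (q $ j)" for j
    proof -
      have "(\<Sum>i\<in>UNIV. complex_of_real (q $ i) * complex_of_real (A $ i $ j)) = complex_of_real (\<Sum>i\<in>UNIV. q $ i * A $ i $ j)"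
        by (simp add: of_real_sum)
      thus ?thesis using qAj by simp
    qed
    have "(\<Sum>i\<in>UNIV. complex_of_real (q $ i) * (\<Sum>j\<in>UNIV. complex_of_real (A $ i $ j) * v $ j))
        = (\<Sum>i\<in>UNIV. \<Sum>j\<in>UNIV. complex_of_real (q $ i) * complex_of_real (A $ i $ j) * v $ j)"
      by (simp only: sum_distrib_left mult.assoc)
    also have "\<dots> = (\<Sum>j\<in>UNIV. \<Sum>i\<in>UNIV. complex_of_real (q $ i) * complex_of_real (A $ i $ j) * v $ j)"
      by (rule sum.swap)
    also have "\<dots> = (\<Sum>j\<in>UNIV. (\<Sum>i\<in>UNIV. complex_of_real (q $ i) * complex_of_real (A $ i $ j)) * v $ j)"
      by (simp only: sum_distrib_right)
    also have "\<dots> = (\<Sum>j\<in>UNIV. complex_of_real r * (complex_of_real (q $ j) * v $ j))"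
      by (simp only: qAjc mult.assoc)
    also have "\<dots> = complex_of_real r * (\<Sum>j\<in>UNIV. complex_of_real (q $ j) * v $ j)"
      by (simp only: sum_distrib_left)
    finally have e1: "(\<Sum>i\<in>UNIV. complex_of_real (q $ i) * (\<Sum>j\<in>UNIV. complex_of_real (A $ i $ j) * v $ j))
        = complex_of_real r * (\<Sum>j\<in>UNIV. complex_of_real (q $ j) * v $ j)" .
    have "(\<Sum>i\<in>UNIV. complex_of_real (q $ i) * (\<Sum>j\<in>UNIV. complex_of_real (A $ i $ j) * v $ j))
        = (\<Sum>i\<in>UNIV. mu * (complex_of_real (q $ i) * v $ i))"
      by (simp only: evi mult.left_commute)
    also have "\<dots> = mu * (\<Sum>j\<in>UNIV. complex_of_real (q $ j) * v $ j)"
      by (simp only: sum_distrib_left)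
    finally have e2: "(\<Sum>i\<in>UNIV. complex_of_real (q $ i) * (\<Sum>j\<in>UNIV. complex_of_real (A $ i $ j) * v $ j))
        = mu * (\<Sum>j\<in>UNIV. complex_of_real (q $ j) * v $ j)" .
    have "(mu - complex_of_real r) * (\<Sum>j\<in>UNIV. complex_of_real (q $ j) * v $ j) = 0"
      using e1 e2 by (simp only: left_diff_distrib) simp
    moreover have "mu - complex_of_real r \<noteq> 0"
    proof
      assume "mu - complex_of_real r = 0"
      hence "Im mu = 0" by (simp add: complex_eq_iff)
      thus False using nonreal by simp
    qed
    ultimately show ?thesis by simp
  qed
  \<comment> \<open>rotate the eigenvector so that real and imaginary parts are orthogonal\<close>
  define S2 where "S2 = (\<Sum>j\<in>UNIV. (v $ j)^2)"
  define zeta where "zeta = (if S2 = 0 then 1 else csqrt (cnj S2))"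
  have zeta0: "zeta \<noteq> 0" unfolding zeta_def by (cases "S2 = 0") simp_all
  have zS: "Im (zeta^2 * S2) = 0"
  proof (cases "S2 = 0")
    case True thus ?thesis unfolding zeta_def by simp
  next
    case False
    hence "zeta^2 = cnj S2" unfolding zeta_def by simp
    moreover have "Im (cnj S2 * S2) = 0" by simp
    ultimately show ?thesis by simp
  qed
  define v' where "v' = zeta *s v"
  have v'0: "v' \<noteq> 0" unfolding v'_def using v0 zeta0 by (simp add: vec_eq_iff)
  have evi': "(\<Sum>j\<in>UNIV. complex_of_real (A $ i $ j) * v' $ j) = mu * v' $ i" for i
  proof -
    have "(\<Sum>j\<in>UNIV. complex_of_real (A $ i $ j) * v' $ j) = zeta * (\<Sum>j\<in>UNIV. complex_of_real (A $ i $ j) * v $ j)"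
      unfolding v'_def by (simp add: sum_distrib_left mult.left_commute)
    thus ?thesis using evi unfolding v'_def by (simp add: mult.left_commute)
  qed
  have qv': "(\<Sum>j\<in>UNIV. complex_of_real (q $ j) * v' $ j) = 0"
  proof -
    have "(\<Sum>j\<in>UNIV. complex_of_real (q $ j) * v' $ j) = zeta * (\<Sum>j\<in>UNIV. complex_of_real (q $ j) * v $ j)"
      unfolding v'_def by (simp add: sum_distrib_left mult.left_commute)
    thus ?thesis using qv by simp
  qed
  have S2': "Im (\<Sum>j\<in>UNIV. (v' $ j)^2) = 0"
  proof -
    have "(\<Sum>j\<in>UNIV. (v' $ j)^2) = zeta^2 * S2" unfolding v'_def S2_def
      by (simp add: sum_distrib_left power_mult_distrib)
    thus ?thesis using zS by simp
  qed
  define x where "x = (\<chi> j. Re (v' $ j))"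
  define y where "y = (\<chi> j. Im (v' $ j))"
  define a where "a = Re mu"
  define b where "b = Im mu"
  have Ax: "A *v x = a *\<^sub>R x - b *\<^sub>R y"
  proof -
    have "(A *v x) $ i = (a *\<^sub>R x - b *\<^sub>R y) $ i" for i
    proof -
      have "(A *v x) $ i = Re (\<Sum>j\<in>UNIV. complex_of_real (A $ i $ j) * v' $ j)"
        unfolding x_def by (simp add: matrix_vector_mult_def Re_sum)
      thus ?thesis using evi' unfolding x_def y_def a_def b_def by simp
    qed
    thus ?thesis by (simp add: vec_eq_iff)
  qed
  have Ay: "A *v y = b *\<^sub>R x + a *\<^sub>R y"
  proof -
    have "(A *v y) $ i = (b *\<^sub>R x + a *\<^sub>R y) $ i" for i
    proof -
      have "(A *v y) $ i = Im (\<Sum>j\<in>UNIV. complex_of_real (A $ i $ j) * v' $ j)"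
        unfolding y_def by (simp add: matrix_vector_mult_def Im_sum)
      also have "\<dots> = Im (mu * v' $ i)" using evi'[of i] by simp
      finally show ?thesis unfolding x_def y_def a_def b_def by (simp add: algebra_simps)
    qed
    thus ?thesis by (simp add: vec_eq_iff)
  qed
  have b0: "b \<noteq> 0" unfolding b_def using nonreal .
  have x0: "x \<noteq> 0"
  proof
    assume x: "x = 0"
    hence "b *\<^sub>R y = 0" using Ax by simp
    hence "y = 0" using b0 by simp
    hence "v' = 0" using x unfolding x_def y_def by (simp add: vec_eq_iff complex_eq_iff)
    thus False using v'0 by simp
  qed
  have y0: "y \<noteq> 0"
  proof
    assume y: "y = 0"
    hence "b *\<^sub>R x = 0" using Ay by simp
    hence "x = 0" using b0 by simp
    thus False using x0 by simp
  qed
  have xy: "inner x y = 0"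
  proof -
    have "Im (\<Sum>j\<in>UNIV. (v' $ j)^2) = 2 * inner x y"
      unfolding x_def y_def by (simp add: Im_sum inner_vec_def power2_eq_square sum_distrib_left mult.commute)
    thus ?thesis using S2' by simp
  qed
  define p where "p = (1 / norm q) *\<^sub>R q"
  have nq: "norm q > 0" using q0 by simp
  have pnn: "\<forall>i. 0 \<le> p $ i" unfolding p_def using qnn nq by simp
  have pn: "inner p p = 1" unfolding p_def using nq
    by (simp add: power2_norm_eq_inner[symmetric] power2_eq_square)
  have pA: "p v* A = r *\<^sub>R p"
  proof -
    have "p v* A = (1 / norm q) *\<^sub>R (q v* A)"
      unfolding p_def by (simp add: vec_eq_iff vector_matrix_mult_def sum_distrib_left algebra_simps)
    thus ?thesis using qA unfolding p_def by simp
  qed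
  have px: "inner p x = 0" and py: "inner p y = 0"
  proof -
    have "inner q x = Re (\<Sum>j\<in>UNIV. complex_of_real (q $ j) * v' $ j)"
      unfolding x_def by (simp add: inner_vec_def Re_sum)
    hence "inner q x = 0" using qv' by simp
    thus "inner p x = 0" unfolding p_def by simp
    have "inner q y = Im (\<Sum>j\<in>UNIV. complex_of_real (q $ j) * v' $ j)"
      unfolding y_def by (simp add: inner_vec_def Im_sum)
    hence "inner q y = 0" using qv' by simp
    thus "inner p y = 0" unfolding p_def by simp
  qed
  have rm: "sqrt (a^2 + b^2) \<le> r" using mr unfolding a_def b_def cmod_def .
  have G: "12 * (sqrt (a^2+b^2))^2 - 3 * sqrt (a^2+b^2) * real CARD('n) - (real CARD('n))^2 \<le> 0"
    by (rule geom[OF nonneg le1 xy x0 y0 Ax Ay pnn pn pA px py rm])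
  hence G': "12 * (cmod mu)^2 - 3 * cmod mu * real CARD('n) - (real CARD('n))^2 \<le> 0"
    unfolding a_def b_def cmod_def .
  have bnd: "cmod mu \<le> (3 + sqrt 57) / 24 * real CARD('n)"
    by (rule sqrt57_root[OF norm_ge_zero _ G']) simp
  have "sqrt 57 \<le> 9"
  proof -
    have "sqrt 57 \<le> sqrt ((9::real)^2)" by (rule real_sqrt_le_mono) simp
    thus ?thesis by simp
  qed
  hence "(3 + sqrt 57) / 24 * real CARD('n) \<le> real CARD('n) / 2" by (simp add: field_simps)
  hence c1: "cmod mu \<le> real CARD('n) / 2" using bnd by linarith
  have c2: "\<bar>Re mu\<bar> \<le> (3 + sqrt 57) / 24 * real CARD('n)" using bnd abs_Re_le_cmod[of mu] by linarith
  show ?thesis using c1 c2 by blast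
qed

end
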